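(* Let $\mu>0$, $x>0$, $y>0$. For $n=0,1,2,\ldots$, if $F_\mu(x,y)>F_{\mu+n+1}(x,y)$ then $$P_{\mu}(x,y)<U_{\mu}^{(n)}(x,y)=\frac{\sum_{k=0}^n F_{\mu+k}(x,y)}{F_\mu(x,y)-F_{\mu+n+1}(x,y)}\,F_{\mu}(x,y).$$ The sequence $U_\mu^{(n)}(x,y)$ converges (to $P_\mu(x,y)$) as $n\to+\infty$.
   Context: $P_{\mu}(x,y)=x^{\frac12(1-\mu)}\int_0^{y} t^{\frac12(\mu-1)}e^{-t-x}I_{\mu-1}(2\sqrt{xt})\,dt$ for $\mu>0$, with $I_\nu$ the modified Bessel function of the first kind; $F_{\mu}(x,y)=(y/x)^{\mu/2}e^{-x-y}I_{\mu}(2\sqrt{xy})$. *)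

theory Defs
  imports "HOL-Analysis.Analysis"
begin

definition besselI :: "real \<Rightarrow> real \<Rightarrow> real" where
  "besselI \<nu> z = (\<Sum>k. (z / 2) powr (2 * real k + \<nu>) / (fact k * Gamma (real k + \<nu> + 1)))"

definition marcumP :: "real \<Rightarrow> real \<Rightarrow> real \<Rightarrow> real" where
  "marcumP \<mu> x y = x powr ((1 - \<mu>) / 2) *
     integral {0..y} (\<lambda>t. t powr ((\<mu> - 1) / 2) * exp (- t - x) * besselI (\<mu> - 1) (2 * sqrt (x * t)))"

definition marcumF :: "real \<Rightarrow> real \<Rightarrow> real \<Rightarrow> real" where
  "marcumF \<mu> x y = (y / x) powr (\<mu> / 2) * exp (- x - y) * besselI \<mu> (2 * sqrt (x * y))"

definition marcumU :: "real \<Rightarrow> nat \<Rightarrow> real \<Rightarrow> real \<Rightarrow> real" where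
  "marcumU \<mu> n x y = (\<Sum>k\<le>n. marcumF (\<mu> + real k) x y) /
     (marcumF \<mu> x y - marcumF (\<mu> + real n + 1) x y) * marcumF \<mu> x y"

end

theory Submission
  imports Defs
begin

lemma Gamma_plus1_pos: "(z::real) > 0 \<Longrightarrow> Gamma (z + 1) = z * Gamma z"
  by (metis Gamma_plus1 nonpos_Ints_cases of_int_le_0_iff not_le order_le_less_trans)

definition pc :: "real \<Rightarrow> nat \<Rightarrow> real" where
  "pc a k = 1 / (fact k * Gamma (real k + a + 1))"

definition phi :: "real \<Rightarrow> real \<Rightarrow> real" where
  "phi a w = (\<Sum>k. pc a k * w ^ k)"

lemma phi_summable:
  assumes "a > -1"
  shows "summable (\<lambda>k. w ^ k / (fact k * Gamma (real k + a + 1)))"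
proof (rule summable_ratio_test[where c="1/2" and N="nat \<lceil>2*\<bar>w\<bar>\<rceil> + 1"])
  fix n assume n: "n \<ge> nat \<lceil>2*\<bar>w\<bar>\<rceil> + 1"
  have G: "Gamma (real n + a + 1) > 0" using assms by simp
  have G1: "Gamma (real (Suc n) + a + 1) = (real n + a + 1) * Gamma (real n + a + 1)"
    using Gamma_plus1_pos[of "real n + a + 1"] assms by (simp add: add_ac)
  have nn: "real n \<ge> 2*\<bar>w\<bar> + 1" using n by linarith
  have p: "(real n + 1) * (real n + a + 1) \<ge> 2 * \<bar>w\<bar>"
  proof -
    have "(real n + 1) * (real n + a + 1) \<ge> (real n + 1) * 1"
      using assms nn by (intro mult_left_mono) auto
    then have "real n + 1 \<le> (real n + 1) * (real n + a + 1)" by simp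
    then show ?thesis using nn by linarith
  qed
  have pos: "(real n + 1) * (real n + a + 1) > 0" using assms by (intro mult_pos_pos) auto
  have "norm (w ^ Suc n / (fact (Suc n) * Gamma (real (Suc n) + a + 1)))
      = (\<bar>w\<bar> / ((real n + 1) * (real n + a + 1))) * norm (w ^ n / (fact n * Gamma (real n + a + 1)))"
  proof -
    have A: "norm (w ^ n / (fact n * Gamma (real n + a + 1))) = \<bar>w\<bar>^n / (fact n * Gamma (real n + a + 1))"
      using G by (simp add: abs_mult power_abs)
    have B: "norm (w ^ Suc n / (fact (Suc n) * Gamma (real (Suc n) + a + 1))) = \<bar>w\<bar>^Suc n / (fact (Suc n) * ((real n + a + 1) * Gamma (real n + a + 1)))"
      unfolding G1 using G pos assms by (simp add: abs_mult power_abs)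
    show ?thesis unfolding A B using G pos by (simp add: field_simps)
  qed
  also have "\<dots> \<le> (1/2) * norm (w ^ n / (fact n * Gamma (real n + a + 1)))"
    using p pos by (intro mult_right_mono) (auto simp: field_simps)
  finally show "norm (w ^ Suc n / (fact (Suc n) * Gamma (real (Suc n) + a + 1)))
      \<le> (1/2) * norm (w ^ n / (fact n * Gamma (real n + a + 1)))" .
qed simp


lemma pc_summable: "a > -1 \<Longrightarrow> summable (\<lambda>k. pc a k * w ^ k)"
  using phi_summable[of a w] by (simp add: pc_def)

lemma phi_sums: "a > -1 \<Longrightarrow> (\<lambda>k. pc a k * w ^ k) sums phi a w"
  unfolding phi_def by (rule summable_sums, rule pc_summable)

lemma pc_pos: "a > -1 \<Longrightarrow> pc a k > 0"
  unfolding pc_def by simp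

lemma phi_pos: "a > -1 \<Longrightarrow> w \<ge> 0 \<Longrightarrow> phi a w > 0"
  unfolding phi_def
  by (rule suminf_pos2[where i=0]) (auto intro: pc_summable simp: pc_pos less_imp_le)

lemma phi_mono: "a > -1 \<Longrightarrow> 0 \<le> w1 \<Longrightarrow> w1 \<le> w2 \<Longrightarrow> phi a w1 \<le> phi a w2"
  unfolding phi_def
  by (rule suminf_le) (auto intro!: pc_summable mult_left_mono power_mono simp: pc_pos less_imp_le)

lemma besselI_eq:
  assumes "a > -1" "w > 0"
  shows "besselI a (2 * sqrt w) = w powr (a/2) * phi a w"
proof -
  have t: "(2 * sqrt w / 2) powr (2 * real k + a) / (fact k * Gamma (real k + a + 1))
        = w powr (a/2) * (pc a k * w ^ k)" for k
  proof -
    have "(2 * sqrt w / 2) powr (2 * real k + a) = (w powr (1/2)) powr (2 * real k + a)"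
      using assms by (simp add: powr_half_sqrt)
    also have "\<dots> = w powr (real k + a/2)" by (simp add: powr_powr algebra_simps)
    also have "\<dots> = w ^ k * w powr (a/2)" using assms by (simp add: powr_add powr_realpow)
    finally show ?thesis by (simp add: pc_def)
  qed
  have "(\<lambda>k. w powr (a/2) * (pc a k * w ^ k)) sums (w powr (a/2) * phi a w)"
    by (rule sums_mult, rule phi_sums, rule assms)
  then show ?thesis unfolding besselI_def t by (rule sums_unique[symmetric])
qed

lemma marcumF_eq:
  assumes "a > -1" "x > 0" "y > 0"
  shows "marcumF a x y = exp (- x - y) * y powr a * phi a (x * y)"
proof -
  have "marcumF a x y = (y / x) powr (a/2) * exp (- x - y) * ((x * y) powr (a/2) * phi a (x * y))"
    unfolding marcumF_def using assms by (simp add: besselI_eq)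
  also have "(y / x) powr (a/2) * (x * y) powr (a/2) = y powr a"
  proof -
    have "(y / x) powr (a/2) * (x * y) powr (a/2) = ((y / x) * (x * y)) powr (a/2)"
      using assms by (subst powr_mult[symmetric]) auto
    also have "(y / x) * (x * y) = y * y" using assms by simp
    also have "(y * y) powr (a/2) = y powr (a/2 + a/2)" using assms powr_add[of y "a/2" "a/2"] by (simp add: powr_mult)
    finally show ?thesis by simp
  qed
  ultimately show ?thesis by (simp add: algebra_simps)
qed

definition phid :: "real \<Rightarrow> real \<Rightarrow> real" where
  "phid a w = (\<Sum>n. diffs (pc a) n * w ^ n)"

lemma phi_deriv: "a > -1 \<Longrightarrow> (phi a has_real_derivative phid a w) (at w)"
  unfolding phi_def[abs_def] phid_def
  by (rule termdiffs_strong_converges_everywhere, rule pc_summable)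

lemma pc_rec: "\<nu> > 0 \<Longrightarrow> (\<nu> + real k) * pc \<nu> k = pc (\<nu> - 1) k"
proof -
  assume "\<nu> > 0"
  then have e1: "Gamma (real k + \<nu> + 1) = (real k + \<nu>) * Gamma (real k + \<nu>)"
    using Gamma_plus1_pos[of "real k + \<nu>"] by simp
  have e2: "real k + (\<nu> - 1) + 1 = real k + \<nu>" by simp
  have "Gamma (real k + \<nu>) > 0" "real k + \<nu> > 0" "fact k > (0::real)" using \<open>\<nu> > 0\<close> by simp_all
  moreover have "\<And>c f G::real. c \<noteq> 0 \<Longrightarrow> c * (1 / (f * (c * G))) = 1 / (f * G)"
    by (simp add: field_simps)
  ultimately show ?thesis unfolding pc_def e1 e2 by (simp add: add.commute)
qed

lemma phi_rec:
  assumes "\<nu> > 0"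
  shows "\<nu> * phi \<nu> w + w * phid \<nu> w = phi (\<nu> - 1) w"
proof -
  define d where "d k = real k * pc \<nu> k * w ^ k" for k
  have s1: "(\<lambda>n. w * (diffs (pc \<nu>) n * w ^ n)) sums (w * phid \<nu> w)"
    unfolding phid_def
    by (intro sums_mult summable_sums termdiff_converges_all pc_summable) (use assms in simp)
  have "(\<lambda>n. w * (diffs (pc \<nu>) n * w ^ n)) = (\<lambda>n. d (Suc n))"
    by (auto simp: d_def diffs_def algebra_simps)
  with s1 have "d sums (w * phid \<nu> w + d 0)" by (simp add: sums_Suc_iff)
  then have s2: "d sums (w * phid \<nu> w)" by (simp add: d_def)
  have s3: "(\<lambda>k. \<nu> * (pc \<nu> k * w ^ k)) sums (\<nu> * phi \<nu> w)"
    by (intro sums_mult phi_sums) (use assms in simp)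
  have "(\<lambda>k. \<nu> * (pc \<nu> k * w ^ k) + d k) sums (\<nu> * phi \<nu> w + w * phid \<nu> w)"
    by (rule sums_add[OF s3 s2])
  moreover have "(\<lambda>k. \<nu> * (pc \<nu> k * w ^ k) + d k) = (\<lambda>k. pc (\<nu> - 1) k * w ^ k)"
  proof
    fix k
    have "\<nu> * (pc \<nu> k * w ^ k) + d k = ((\<nu> + real k) * pc \<nu> k) * w ^ k"
      by (simp add: d_def algebra_simps)
    also have "\<dots> = pc (\<nu> - 1) k * w ^ k" by (simp only: pc_rec[OF assms])
    finally show "\<nu> * (pc \<nu> k * w ^ k) + d k = pc (\<nu> - 1) k * w ^ k" .
  qed
  ultimately have "(\<lambda>k. pc (\<nu> - 1) k * w ^ k) sums (\<nu> * phi \<nu> w + w * phid \<nu> w)" by simp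
  moreover have "(\<lambda>k. pc (\<nu> - 1) k * w ^ k) sums phi (\<nu> - 1) w"
    by (rule phi_sums) (use assms in simp)
  ultimately show ?thesis using sums_unique2 by blast
qed

definition H :: "real \<Rightarrow> real \<Rightarrow> real \<Rightarrow> real" where
  "H x a t = exp (- x - t) * t powr a * phi a (x * t)"

lemma H_deriv:
  assumes "\<nu> > 0" "t > 0"
  shows "(H x \<nu> has_real_derivative (H x (\<nu> - 1) t - H x \<nu> t)) (at t)"
proof -
  have d1: "((\<lambda>t. phi \<nu> (x * t)) has_real_derivative phid \<nu> (x * t) * x) (at t)"
    by (rule DERIV_chain2[OF phi_deriv]) (use assms in \<open>auto intro!: derivative_eq_intros\<close>)
  have e: "((\<lambda>t. exp (- x - t)) has_real_derivative (- exp (- x - t))) (at t)"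
    by (auto intro!: derivative_eq_intros)
  have p: "((\<lambda>t. t powr \<nu>) has_real_derivative \<nu> * t powr (\<nu> - 1)) (at t)"
    by (rule has_real_derivative_powr) (use assms in simp)
  have D: "(H x \<nu> has_real_derivative
      (exp (- x - t) * t powr \<nu>) * (phid \<nu> (x * t) * x) +
      (exp (- x - t) * (\<nu> * t powr (\<nu> - 1)) + (- exp (- x - t)) * t powr \<nu>) * phi \<nu> (x * t)) (at t)"
    unfolding H_def[abs_def] by (rule DERIV_mult'[OF DERIV_mult'[OF e p] d1])
  have tp: "t powr \<nu> = t * t powr (\<nu> - 1)" using powr_mult_base[of t "\<nu> - 1"] assms by simp
  have r: "phi (\<nu> - 1) (x * t) = \<nu> * phi \<nu> (x * t) + (x * t) * phid \<nu> (x * t)"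
    using phi_rec[OF assms(1)] by simp
  have "(exp (- x - t) * t powr \<nu>) * (phid \<nu> (x * t) * x) +
      (exp (- x - t) * (\<nu> * t powr (\<nu> - 1)) + (- exp (- x - t)) * t powr \<nu>) * phi \<nu> (x * t) = H x (\<nu> - 1) t - H x \<nu> t"
    unfolding H_def r tp by (simp add: algebra_simps)
  with D show ?thesis by simp
qed

lemma phi_isCont: "a > -1 \<Longrightarrow> isCont (phi a) w"
  by (rule DERIV_isCont[OF phi_deriv])

lemma H_cont:
  assumes "\<nu> > 0"
  shows "continuous_on {0..y} (H x \<nu>)"
proof -
  have c: "continuous_on {0..y} (\<lambda>t. phi \<nu> (x * t))"
  proof (intro continuous_at_imp_continuous_on ballI)
    fix t :: real
    have i: "isCont (\<lambda>t. x * t) t" by simp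
    show "isCont (\<lambda>t. phi \<nu> (x * t)) t"
      by (rule isCont_o2[OF i phi_isCont]) (use assms in simp)
  qed
  show ?thesis unfolding H_def[abs_def]
  proof (rule continuous_on_mult[OF continuous_on_mult c])
    show "continuous_on {0..y} (\<lambda>t. exp (- x - t))"
      by (intro continuous_on_exp continuous_on_diff continuous_on_const continuous_on_id)
    show "continuous_on {0..y} (\<lambda>t. t powr \<nu>)"
      by (rule continuous_on_powr'[OF continuous_on_id continuous_on_const]) (use assms in auto)
  qed
qed

lemma H_zero: "a > 0 \<Longrightarrow> H x a 0 = 0"
  by (simp add: H_def)

lemma H_ftc:
  assumes "\<nu> > 0" "y > 0"
  shows "((\<lambda>t. H x (\<nu> - 1) t - H x \<nu> t) has_integral H x \<nu> y) {0..y}"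
proof -
  have "((\<lambda>t. H x (\<nu> - 1) t - H x \<nu> t) has_integral H x \<nu> y - H x \<nu> 0) {0..y}"
    by (rule fundamental_theorem_of_calculus_interior)
       (use assms H_cont[OF assms(1)] H_deriv[OF assms(1)] in
        \<open>auto simp: has_real_derivative_iff_has_vector_derivative[symmetric]\<close>)
  then show ?thesis using H_zero[OF assms(1)] by simp
qed

lemma H_nonneg: "a > -1 \<Longrightarrow> x \<ge> 0 \<Longrightarrow> t \<ge> 0 \<Longrightarrow> H x a t \<ge> 0"
  unfolding H_def using phi_pos[of a "x * t"] by (intro mult_nonneg_nonneg) auto

lemma marcumP_eq:
  assumes "\<nu> > 0" "x > 0" "y > 0"
  shows "marcumP \<nu> x y = integral {0..y} (H x (\<nu> - 1))"
proof -
  have "marcumP \<nu> x y = integral {0..y} (\<lambda>t. x powr ((1 - \<nu>) / 2) * (t powr ((\<nu> - 1) / 2) * exp (- t - x) * besselI (\<nu> - 1) (2 * sqrt (x * t))))"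
    unfolding marcumP_def by simp
  also have "\<dots> = integral {0..y} (H x (\<nu> - 1))"
  proof (rule integral_cong)
    fix t assume t: "t \<in> {0..y}"
    show "x powr ((1 - \<nu>) / 2) * (t powr ((\<nu> - 1) / 2) * exp (- t - x) * besselI (\<nu> - 1) (2 * sqrt (x * t))) = H x (\<nu> - 1) t"
    proof (cases "t = 0")
      case True then show ?thesis by (simp add: H_def)
    next
      case False
      then have tp: "t > 0" using t by simp
      have b: "besselI (\<nu> - 1) (2 * sqrt (x * t)) = (x * t) powr ((\<nu> - 1) / 2) * phi (\<nu> - 1) (x * t)"
        using besselI_eq[of "\<nu> - 1" "x * t"] assms tp by simp
      have xt: "(x * t) powr ((\<nu> - 1) / 2) = x powr ((\<nu> - 1) / 2) * t powr ((\<nu> - 1) / 2)"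
        using assms tp by (simp add: powr_mult)
      have xx: "x powr ((1 - \<nu>) / 2) * x powr ((\<nu> - 1) / 2) = 1"
      proof -
        have e: "(1 - \<nu>) / 2 + (\<nu> - 1) / 2 = 0" by (simp add: field_simps)
        show ?thesis using assms powr_add[of x "(1 - \<nu>) / 2" "(\<nu> - 1) / 2"] unfolding e by simp
      qed
      have tt: "t powr ((\<nu> - 1) / 2) * t powr ((\<nu> - 1) / 2) = t powr (\<nu> - 1)"
        using powr_add[of t "(\<nu> - 1) / 2" "(\<nu> - 1) / 2"] by simp
      have "x powr ((1 - \<nu>) / 2) * (t powr ((\<nu> - 1) / 2) * exp (- t - x) * besselI (\<nu> - 1) (2 * sqrt (x * t)))
          = (x powr ((1 - \<nu>) / 2) * x powr ((\<nu> - 1) / 2)) * (t powr ((\<nu> - 1) / 2) * t powr ((\<nu> - 1) / 2))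
            * exp (- t - x) * phi (\<nu> - 1) (x * t)"
        unfolding b xt by (simp only: mult_ac)
      also have "\<dots> = H x (\<nu> - 1) t" unfolding xx tt H_def by (simp add: algebra_simps)
      finally show ?thesis .
    qed
  qed
  finally show ?thesis .
qed

lemma H_has_integral:
  assumes "\<nu> > 0" "y > 0"
  shows "(H x (\<nu> - 1) has_integral (H x \<nu> y + integral {0..y} (H x \<nu>))) {0..y}"
proof -
  have i: "(H x \<nu> has_integral integral {0..y} (H x \<nu>)) {0..y}"
    by (rule integrable_integral, rule integrable_continuous_interval, rule H_cont, rule assms)
  have "((\<lambda>t. (H x (\<nu> - 1) t - H x \<nu> t) + H x \<nu> t) has_integral (H x \<nu> y + integral {0..y} (H x \<nu>))) {0..y}"
    by (rule has_integral_add[OF H_ftc[OF assms] i])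
  then show ?thesis by simp
qed

lemma P_rec:
  assumes "\<nu> > 0" "x > 0" "y > 0"
  shows "marcumP \<nu> x y = marcumF \<nu> x y + marcumP (\<nu> + 1) x y"
proof -
  have "marcumP \<nu> x y = H x \<nu> y + integral {0..y} (H x \<nu>)"
    using marcumP_eq[OF assms] H_has_integral[OF assms(1,3), of x] by (simp add: integral_unique)
  moreover have "marcumP (\<nu> + 1) x y = integral {0..y} (H x \<nu>)"
    using marcumP_eq[of "\<nu> + 1" x y] assms by simp
  moreover have "marcumF \<nu> x y = H x \<nu> y"
    using marcumF_eq[of \<nu> x y] assms by (simp add: H_def)
  ultimately show ?thesis by simp
qed

lemma P_nonneg:
  assumes "\<nu> > 0" "x > 0" "y > 0"
  shows "marcumP \<nu> x y \<ge> 0"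
proof -
  have "H x (\<nu> - 1) integrable_on {0..y}"
    using H_has_integral[OF assms(1,3), of x] by blast
  then show ?thesis unfolding marcumP_eq[OF assms]
    by (rule integral_nonneg) (use assms in \<open>auto intro!: H_nonneg\<close>)
qed

lemma Gamma_mono_shift: "a \<ge> 0 \<Longrightarrow> Gamma (real k + a + 1) \<ge> Gamma (a + 1)"
proof (induction k)
  case 0 then show ?case by simp
next
  case (Suc k)
  have "Gamma (real (Suc k) + a + 1) = (real k + a + 1) * Gamma (real k + a + 1)"
    using Gamma_plus1_pos[of "real k + a + 1"] Suc.prems by (simp add: add_ac)
  also have "\<dots> \<ge> 1 * Gamma (real k + a + 1)"
    using Suc.prems by (intro mult_right_mono) auto
  finally show ?case using Suc by simp
qed

lemma phi_le_exp:
  assumes "a \<ge> 0" "w \<ge> 0"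
  shows "phi a w \<le> exp w / Gamma (a + 1)"
proof (rule sums_le[OF _ phi_sums])
  show "(\<lambda>n. w ^ n /\<^sub>R fact n / Gamma (a + 1)) sums (exp w / Gamma (a + 1))"
    by (rule sums_divide, rule exp_converges)
  fix n
  have g: "Gamma (a + 1) > 0" "Gamma (real n + a + 1) \<ge> Gamma (a + 1)"
    using assms Gamma_mono_shift[of a n] by auto
  have "pc a n * w ^ n = w ^ n / (fact n * Gamma (real n + a + 1))" by (simp add: pc_def)
  also have "\<dots> \<le> w ^ n / (fact n * Gamma (a + 1))"
    using g assms by (intro divide_left_mono mult_left_mono mult_pos_pos) auto
  finally show "pc a n * w ^ n \<le> w ^ n /\<^sub>R fact n / Gamma (a + 1)"
    by (simp add: divide_inverse mult_ac)
qed (use assms in simp)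

lemma P_bound:
  assumes "\<nu> \<ge> 1" "x > 0" "y > 0"
  shows "marcumP \<nu> x y \<le> y powr \<nu> * exp (x * y) / Gamma \<nu>"
proof -
  have n0: "\<nu> > 0" using assms by simp
  have I: "H x (\<nu> - 1) integrable_on {0..y}"
    using H_has_integral[OF n0 assms(3), of x] by blast
  have "marcumP \<nu> x y \<le> integral {0..y} (\<lambda>t. y powr (\<nu> - 1) * phi (\<nu> - 1) (x * y))"
    unfolding marcumP_eq[OF n0 assms(2,3)]
  proof (rule integral_le[OF I])
    show "(\<lambda>t. y powr (\<nu> - 1) * phi (\<nu> - 1) (x * y)) integrable_on {0..y}"
      by (rule integrable_continuous_interval, rule continuous_on_const)
    fix t assume t: "t \<in> {0..y}"
    have "H x (\<nu> - 1) t \<le> 1 * y powr (\<nu> - 1) * phi (\<nu> - 1) (x * y)"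
      unfolding H_def
    proof (intro mult_mono)
      show "exp (- x - t) \<le> 1" using assms t by simp
      show "t powr (\<nu> - 1) \<le> y powr (\<nu> - 1)" using assms t by (intro powr_mono2) auto
      show "phi (\<nu> - 1) (x * t) \<le> phi (\<nu> - 1) (x * y)"
        using assms t by (intro phi_mono mult_left_mono) auto
    qed (use assms t phi_pos[of "\<nu> - 1" "x * y"] phi_pos[of "\<nu> - 1" "x * t"] in auto)
    then show "H x (\<nu> - 1) t \<le> y powr (\<nu> - 1) * phi (\<nu> - 1) (x * y)" by simp
  qed
  also have "\<dots> = y * (y powr (\<nu> - 1) * phi (\<nu> - 1) (x * y))" using assms by simp
  also have "\<dots> \<le> y * (y powr (\<nu> - 1) * (exp (x * y) / Gamma \<nu>))"
    using phi_le_exp[of "\<nu> - 1" "x * y"] assms by (intro mult_left_mono) auto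
  also have "\<dots> = (y * y powr (\<nu> - 1)) * exp (x * y) / Gamma \<nu>" by simp
  also have "y * y powr (\<nu> - 1) = y powr \<nu>" using powr_mult_base[of y "\<nu> - 1"] assms by simp
  finally show ?thesis .
qed

lemma u_tendsto:
  assumes "\<nu> > 0" "y > 0"
  shows "(\<lambda>n. y powr (\<nu> + real n) / Gamma (\<nu> + real n)) \<longlonglongrightarrow> 0"
proof (rule summable_LIMSEQ_zero, rule summable_ratio_test[where c="1/2" and N="nat \<lceil>2*y\<rceil>"])
  fix n assume n: "n \<ge> nat \<lceil>2*y\<rceil>"
  have G: "Gamma (\<nu> + real n) > 0" using assms by simp
  have G1: "Gamma (\<nu> + real (Suc n)) = (\<nu> + real n) * Gamma (\<nu> + real n)"
    using Gamma_plus1_pos[of "\<nu> + real n"] assms by (simp add: add_ac)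
  have p: "\<nu> + real n \<ge> 2 * y" using n assms by linarith
  have pos: "\<nu> + real n > 0" using assms by simp
  have yp: "y powr (\<nu> + real (Suc n)) = y * y powr (\<nu> + real n)"
    using powr_mult_base[of y "\<nu> + real n"] assms by (simp add: add_ac)
  have "norm (y powr (\<nu> + real (Suc n)) / Gamma (\<nu> + real (Suc n)))
      = (y / (\<nu> + real n)) * (y powr (\<nu> + real n) / Gamma (\<nu> + real n))"
    unfolding G1 yp using G pos assms by simp
  also have "\<dots> \<le> (1/2) * (y powr (\<nu> + real n) / Gamma (\<nu> + real n))"
  proof (rule mult_right_mono)
    show "y / (\<nu> + real n) \<le> 1/2" using p pos by (simp add: field_simps)
  qed (use G in simp)
  also have "\<dots> = (1/2) * norm (y powr (\<nu> + real n) / Gamma (\<nu> + real n))"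
    using G by simp
  finally show "norm (y powr (\<nu> + real (Suc n)) / Gamma (\<nu> + real (Suc n)))
      \<le> (1/2) * norm (y powr (\<nu> + real n) / Gamma (\<nu> + real n))" .
qed simp

lemma P_tendsto:
  assumes "\<nu> > 0" "x > 0" "y > 0"
  shows "(\<lambda>n. marcumP (\<nu> + real n) x y) \<longlonglongrightarrow> 0"
proof (rule tendsto_sandwich[where f="\<lambda>_. 0" and h="\<lambda>n. exp (x * y) * (y powr (\<nu> + real n) / Gamma (\<nu> + real n))"])
  show "\<forall>\<^sub>F n in sequentially. 0 \<le> marcumP (\<nu> + real n) x y"
    using assms by (intro always_eventually allI P_nonneg) auto
  show "\<forall>\<^sub>F n in sequentially. marcumP (\<nu> + real n) x y \<le> exp (x * y) * (y powr (\<nu> + real n) / Gamma (\<nu> + real n))"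
  proof (rule eventually_sequentiallyI[where c=1])
    fix n :: nat assume "n \<ge> 1"
    then have "\<nu> + real n \<ge> 1" using assms by simp
    then show "marcumP (\<nu> + real n) x y \<le> exp (x * y) * (y powr (\<nu> + real n) / Gamma (\<nu> + real n))"
      using P_bound[of "\<nu> + real n" x y] assms by (simp add: mult_ac)
  qed
  show "(\<lambda>n. exp (x * y) * (y powr (\<nu> + real n) / Gamma (\<nu> + real n))) \<longlonglongrightarrow> 0"
    using tendsto_mult[OF tendsto_const u_tendsto[OF assms(1,3)], of "exp (x * y)"] by simp
qed simp

lemma F_partial:
  assumes "\<nu> > 0" "x > 0" "y > 0"
  shows "(\<Sum>k<n. marcumF (\<nu> + real k) x y) = marcumP \<nu> x y - marcumP (\<nu> + real n) x y"
proof (induction n)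
  case 0 then show ?case by simp
next
  case (Suc n)
  have "marcumP (\<nu> + real n) x y = marcumF (\<nu> + real n) x y + marcumP (\<nu> + real n + 1) x y"
    using P_rec[of "\<nu> + real n" x y] assms by simp
  then show ?case using Suc by (simp add: add_ac)
qed

lemma F_sums:
  assumes "\<nu> > 0" "x > 0" "y > 0"
  shows "(\<lambda>k. marcumF (\<nu> + real k) x y) sums marcumP \<nu> x y"
  unfolding sums_def F_partial[OF assms]
  using tendsto_diff[OF tendsto_const P_tendsto[OF assms], of "marcumP \<nu> x y"] by simp

definition SS :: "nat \<Rightarrow> real \<Rightarrow> real \<Rightarrow> real" where
  "SS N \<alpha> \<beta> = (\<Sum>i\<le>N. real (N choose i) / (Gamma (\<alpha> + real i) * Gamma (\<beta> + real (N - i))))"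

lemma SS_split: "SS (Suc N) \<alpha> \<beta> = SS N \<alpha> (\<beta> + 1) + SS N (\<alpha> + 1) \<beta>"
proof -
  define f where "f i = 1 / (Gamma (\<alpha> + real i) * Gamma (\<beta> + real (Suc N - i)))" for i
  have "SS (Suc N) \<alpha> \<beta> = (\<Sum>i\<le>Suc N. real (Suc N choose i) * f i)"
    by (simp add: SS_def f_def)
  also have "\<dots> = f 0 + (\<Sum>i\<le>N. real (Suc N choose Suc i) * f (Suc i))"
    by (subst sum.atMost_Suc_shift) simp
  also have "\<dots> = f 0 + (\<Sum>i\<le>N. real (N choose Suc i) * f (Suc i)) + (\<Sum>i\<le>N. real (N choose i) * f (Suc i))"
    by (simp add: algebra_simps sum.distrib)
  also have "f 0 + (\<Sum>i\<le>N. real (N choose Suc i) * f (Suc i)) = (\<Sum>i\<le>Suc N. real (N choose i) * f i)"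
    by (subst sum.atMost_Suc_shift) simp
  also have "\<dots> = (\<Sum>i\<le>N. real (N choose i) * f i)" by simp
  also have "\<dots> = SS N \<alpha> (\<beta> + 1)"
    unfolding SS_def f_def by (intro sum.cong refl) (simp add: Suc_diff_le algebra_simps)
  also have "(\<Sum>i\<le>N. real (N choose i) * f (Suc i)) = SS N (\<alpha> + 1) \<beta>"
    unfolding SS_def f_def by (intro sum.cong refl) (simp add: algebra_simps)
  finally show ?thesis .
qed

lemma SS_closed:
  assumes "\<alpha> > 0" "\<beta> > 0" "\<alpha> + \<beta> > 1"
  shows "SS N \<alpha> \<beta> = Gamma (\<alpha> + \<beta> + 2 * real N - 1) /
           (Gamma (\<alpha> + real N) * Gamma (\<beta> + real N) * Gamma (\<alpha> + \<beta> + real N - 1))"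
  using assms
proof (induction N arbitrary: \<alpha> \<beta>)
  case 0
  have "Gamma (\<alpha> + \<beta> - 1) > 0" using 0 by simp
  then show ?case by (simp add: SS_def)
next
  case (Suc N)
  define A where "A = Gamma (\<alpha> + real N)"
  define B where "B = Gamma (\<beta> + real N)"
  define C where "C = Gamma (\<alpha> + \<beta> + real N)"
  define D where "D = Gamma (\<alpha> + \<beta> + 2 * real N)"
  have pos: "A > 0" "B > 0" "C > 0" "D > 0" "\<alpha> + real N > 0" "\<beta> + real N > 0"
    using Suc.prems by (auto simp: A_def B_def C_def D_def)
  have eA: "Gamma (\<alpha> + 1 + real N) = (\<alpha> + real N) * A"
    using Gamma_plus1_pos[of "\<alpha> + real N"] pos unfolding A_def by (simp add: add_ac)
  have eB: "Gamma (\<beta> + 1 + real N) = (\<beta> + real N) * B"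
    using Gamma_plus1_pos[of "\<beta> + real N"] pos unfolding B_def by (simp add: add_ac)
  have eD: "Gamma (\<alpha> + \<beta> + 2 * real (Suc N) - 1) = (\<alpha> + \<beta> + 2 * real N) * D"
    using Gamma_plus1_pos[of "\<alpha> + \<beta> + 2 * real N"] pos unfolding D_def by (simp add: algebra_simps)
  have 1: "SS N \<alpha> (\<beta> + 1) = D / (A * ((\<beta> + real N) * B) * C)"
    using Suc.IH[of \<alpha> "\<beta> + 1"] Suc.prems eB unfolding A_def C_def D_def by (simp add: algebra_simps)
  have 2: "SS N (\<alpha> + 1) \<beta> = D / (((\<alpha> + real N) * A) * B * C)"
    using Suc.IH[of "\<alpha> + 1" \<beta>] Suc.prems eA unfolding B_def C_def D_def by (simp add: algebra_simps)
  have 3: "Gamma (\<alpha> + \<beta> + 2 * real (Suc N) - 1) /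
           (Gamma (\<alpha> + real (Suc N)) * Gamma (\<beta> + real (Suc N)) * Gamma (\<alpha> + \<beta> + real (Suc N) - 1))
         = ((\<alpha> + \<beta> + 2 * real N) * D) / (((\<alpha> + real N) * A) * ((\<beta> + real N) * B) * C)"
    unfolding eD using eA eB unfolding C_def by (simp add: algebra_simps)
  have gen: "\<And>a b A B C D::real. a > 0 \<Longrightarrow> b > 0 \<Longrightarrow> A > 0 \<Longrightarrow> B > 0 \<Longrightarrow> C > 0 \<Longrightarrow>
      D / (A * (b * B) * C) + D / ((a * A) * B * C) = ((a + b) * D) / ((a * A) * (b * B) * C)"
    by (simp add: field_simps)
  have e: "\<alpha> + \<beta> + 2 * real N = (\<alpha> + real N) + (\<beta> + real N)" by simp
  show ?case unfolding SS_split 1 2 3 e using pos by (intro gen) auto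
qed

lemma pc_norm_summable: "a > -1 \<Longrightarrow> w \<ge> 0 \<Longrightarrow> summable (\<lambda>k. norm (pc a k * w ^ k))"
proof -
  assume a: "a > -1" and w: "w \<ge> 0"
  have "(\<lambda>k. norm (pc a k * w ^ k)) = (\<lambda>k. pc a k * w ^ k)"
    using pc_pos[OF a] w by (auto intro!: ext simp: abs_mult less_imp_le)
  then show ?thesis using pc_summable[OF a] by simp
qed

lemma phi_prod_sums:
  assumes "a > -1" "b > -1" "a + b > -1" "w \<ge> 0"
  shows "(\<lambda>N. w ^ N / fact N * SS N (a + 1) (b + 1)) sums (phi a w * phi b w)"
proof -
  have cs: "(\<lambda>N. \<Sum>i\<le>N. (pc a i * w ^ i) * (pc b (N - i) * w ^ (N - i))) sums (phi a w * phi b w)"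
    unfolding phi_def
    by (rule Cauchy_product_sums[OF pc_norm_summable pc_norm_summable]) (use assms in auto)
  have "(\<Sum>i\<le>N. (pc a i * w ^ i) * (pc b (N - i) * w ^ (N - i))) = w ^ N / fact N * SS N (a + 1) (b + 1)" for N
  proof -
    have "(\<Sum>i\<le>N. (pc a i * w ^ i) * (pc b (N - i) * w ^ (N - i)))
        = (\<Sum>i\<le>N. w ^ N / fact N * (real (N choose i) / (Gamma (a + 1 + real i) * Gamma (b + 1 + real (N - i)))))"
    proof (intro sum.cong refl)
      fix i assume "i \<in> {..N}"
      then have iN: "i \<le> N" by simp
      have ww: "w ^ i * w ^ (N - i) = w ^ N" using iN by (simp add: power_add[symmetric])
      have Ga: "Gamma (a + 1 + real i) > 0" "Gamma (b + 1 + real (N - i)) > 0" using assms by auto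
      have "(pc a i * w ^ i) * (pc b (N - i) * w ^ (N - i))
          = (w ^ i * w ^ (N - i)) / (fact i * fact (N - i) * Gamma (a + 1 + real i) * Gamma (b + 1 + real (N - i)))"
        by (simp add: pc_def add_ac)
      also have "\<dots> = w ^ N / fact N * (real (N choose i) / (Gamma (a + 1 + real i) * Gamma (b + 1 + real (N - i))))"
        unfolding ww binomial_fact[OF iN] using Ga by (simp add: field_simps)
      finally show "(pc a i * w ^ i) * (pc b (N - i) * w ^ (N - i))
          = w ^ N / fact N * (real (N choose i) / (Gamma (a + 1 + real i) * Gamma (b + 1 + real (N - i))))" .
    qed
    also have "\<dots> = w ^ N / fact N * SS N (a + 1) (b + 1)"
      unfolding SS_def by (simp add: sum_distrib_left)
    finally show ?thesis .
  qed
  then show ?thesis using cs by simp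
qed

lemma turan:
  assumes "\<nu> > 0" "w \<ge> 0"
  shows "phi (\<nu> - 1) w * phi (\<nu> + 1) w < phi \<nu> w * phi \<nu> w"
proof -
  define t1 where "t1 N = w ^ N / fact N * SS N (\<nu> + 1) (\<nu> + 1)" for N
  define t2 where "t2 N = w ^ N / fact N * SS N (\<nu> - 1 + 1) (\<nu> + 1 + 1)" for N
  have s1: "t1 sums (phi \<nu> w * phi \<nu> w)"
    unfolding t1_def by (rule phi_prod_sums) (use assms in auto)
  have s2: "t2 sums (phi (\<nu> - 1) w * phi (\<nu> + 1) w)"
    unfolding t2_def by (rule phi_prod_sums) (use assms in auto)
  have diff: "(\<lambda>N. t1 N - t2 N) sums (phi \<nu> w * phi \<nu> w - phi (\<nu> - 1) w * phi (\<nu> + 1) w)"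
    by (rule sums_diff[OF s1 s2])
  have key: "SS N \<nu> (\<nu> + 2) < SS N (\<nu> + 1) (\<nu> + 1)" for N
  proof -
    define G where "G = Gamma (\<nu> + real N)"
    define K where "K = Gamma (2 * \<nu> + 2 * real N + 1) / Gamma (2 * \<nu> + real N + 1)"
    have pos: "G > 0" "K > 0" "\<nu> + real N > 0" using assms by (auto simp: G_def K_def)
    have g1: "Gamma (\<nu> + 1 + real N) = (\<nu> + real N) * G"
      using Gamma_plus1_pos[of "\<nu> + real N"] pos unfolding G_def by (simp add: add_ac)
    have g2: "Gamma (\<nu> + 2 + real N) = (\<nu> + real N + 1) * ((\<nu> + real N) * G)"
      using Gamma_plus1_pos[of "\<nu> + real N + 1"] pos g1 by (simp add: add_ac)
    have a: "SS N (\<nu> + 1) (\<nu> + 1) = K / (((\<nu> + real N) * G) * ((\<nu> + real N) * G))"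
      using SS_closed[of "\<nu> + 1" "\<nu> + 1" N] assms g1 unfolding K_def
      by (simp add: algebra_simps)
    have b: "SS N \<nu> (\<nu> + 2) = K / (G * ((\<nu> + real N + 1) * ((\<nu> + real N) * G)))"
      using SS_closed[of "\<nu>" "\<nu> + 2" N] assms g2 unfolding K_def G_def
      by (simp add: algebra_simps)
    have "K / (G * ((\<nu> + real N + 1) * ((\<nu> + real N) * G))) < K / (((\<nu> + real N) * G) * ((\<nu> + real N) * G))"
    proof -
      have gen: "\<And>p G K::real. p > 0 \<Longrightarrow> G > 0 \<Longrightarrow> K > 0 \<Longrightarrow>
          K / (G * ((p + 1) * (p * G))) < K / ((p * G) * (p * G))"
      proof -
        fix p G K :: real assume h: "p > 0" "G > 0" "K > 0"
        have "(p * G) * (p * G) < G * ((p + 1) * (p * G))"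
          using h by (simp add: algebra_simps)
        moreover have "0 < (p * G) * (p * G)" using h by simp
        ultimately show "K / (G * ((p + 1) * (p * G))) < K / ((p * G) * (p * G))"
          using h by (intro divide_strict_left_mono) auto
      qed
      show ?thesis using gen[of "\<nu> + real N" G K] pos by simp
    qed
    then show ?thesis unfolding a b .
  qed
  have nn: "t2 N \<le> t1 N" for N
    unfolding t1_def t2_def using key[of N] assms by (intro mult_left_mono) (auto simp: add_ac)
  have p0: "t2 0 < t1 0"
    unfolding t1_def t2_def using key[of 0] by (simp add: add_ac)
  have "0 < (\<Sum>N. t1 N - t2 N)"
    by (rule suminf_pos2[where i=0]) (use diff nn p0 in \<open>auto simp: sums_iff\<close>)
  then show ?thesis using diff by (simp add: sums_iff)
qed

lemma F_pos: "\<nu> > -1 \<Longrightarrow> x > 0 \<Longrightarrow> y > 0 \<Longrightarrow> marcumF \<nu> x y > 0"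
  using marcumF_eq[of \<nu> x y] phi_pos[of \<nu> "x * y"] by simp

lemma F_turan:
  assumes "\<nu> > 0" "x > 0" "y > 0"
  shows "marcumF (\<nu> - 1) x y * marcumF (\<nu> + 1) x y < marcumF \<nu> x y * marcumF \<nu> x y"
proof -
  define E where "E = exp (- x - y)"
  have yy: "y powr (\<nu> - 1) * y powr (\<nu> + 1) = y powr \<nu> * y powr \<nu>"
    using powr_add[of y "\<nu> - 1" "\<nu> + 1"] powr_add[of y \<nu> \<nu>] by simp
  have "marcumF (\<nu> - 1) x y * marcumF (\<nu> + 1) x y
      = (E * E * (y powr \<nu> * y powr \<nu>)) * (phi (\<nu> - 1) (x * y) * phi (\<nu> + 1) (x * y))"
    using marcumF_eq[of "\<nu> - 1" x y] marcumF_eq[of "\<nu> + 1" x y] assms yy[symmetric]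
    by (simp add: E_def mult_ac)
  also have "\<dots> < (E * E * (y powr \<nu> * y powr \<nu>)) * (phi \<nu> (x * y) * phi \<nu> (x * y))"
    using turan[of \<nu> "x * y"] assms by (intro mult_strict_left_mono) (auto simp: E_def)
  also have "\<dots> = marcumF \<nu> x y * marcumF \<nu> x y"
    using marcumF_eq[of \<nu> x y] assms by (simp add: E_def mult_ac)
  finally show ?thesis .
qed

theorem proposition3:
  fixes \<mu> x y :: real
  assumes "\<mu> > 0" and "x > 0" and "y > 0"
  shows "(\<forall>n::nat. marcumF \<mu> x y > marcumF (\<mu> + real n + 1) x y
            \<longrightarrow> marcumP \<mu> x y < marcumU \<mu> n x y)
         \<and> (\<lambda>n. marcumU \<mu> n x y) \<longlonglongrightarrow> marcumP \<mu> x y"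
proof -
  define c where "c i = marcumF (\<mu> + real i) x y" for i
  define P where "P = marcumP \<mu> x y"
  have cpos: "c i > 0" for i
    unfolding c_def using F_pos assms by simp
  have tur: "c i * c (Suc (Suc i)) < c (Suc i) * c (Suc i)" for i
  proof -
    have "marcumF (\<mu> + real (Suc i) - 1) x y * marcumF (\<mu> + real (Suc i) + 1) x y
        < marcumF (\<mu> + real (Suc i)) x y * marcumF (\<mu> + real (Suc i)) x y"
      by (rule F_turan) (use assms in auto)
    moreover have "\<mu> + real (Suc i) - 1 = \<mu> + real i" "\<mu> + real (Suc i) + 1 = \<mu> + real (Suc (Suc i))"
      by simp_all
    ultimately show ?thesis unfolding c_def by (simp only:)
  qed
  define \<rho> where "\<rho> i = c (Suc i) / c i" for i
  have \<rho>pos: "\<rho> i > 0" for i unfolding \<rho>_def using cpos by simp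
  have cS: "c (Suc i) = \<rho> i * c i" for i unfolding \<rho>_def using cpos[of i] by simp
  have \<rho>dec: "\<rho> (Suc i) < \<rho> i" for i
    unfolding \<rho>_def using tur[of i] cpos[of i] cpos[of "Suc i"]
    by (simp add: divide_simps mult_ac)
  have \<rho>mono: "\<rho> j < \<rho> i" if "i < j" for i j
  proof -
    have "(\<lambda>i. - \<rho> i) i < (\<lambda>i. - \<rho> i) j"
      by (rule lift_Suc_mono_less) (use \<rho>dec that in auto)
    then show ?thesis by simp
  qed
  have le: "c (m + k) * c 0 \<le> c m * c k" if "m \<ge> 1" for m k
  proof (induction k)
    case 0 then show ?case by simp
  next
    case (Suc k)
    have "c (m + Suc k) * c 0 = \<rho> (m + k) * (c (m + k) * c 0)" using cS[of "m + k"] by simp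
    also have "\<dots> \<le> \<rho> (m + k) * (c m * c k)" using Suc \<rho>pos[of "m + k"] by (intro mult_left_mono) auto
    also have "\<dots> \<le> \<rho> k * (c m * c k)"
      using \<rho>mono[of k "m + k"] that cpos[of m] cpos[of k] by (intro mult_right_mono) auto
    also have "\<dots> = c m * c (Suc k)" using cS[of k] by simp
    finally show ?case .
  qed
  have lt: "c (m + Suc k) * c 0 < c m * c (Suc k)" if "m \<ge> 1" for m k
  proof -
    have "c (m + Suc k) * c 0 = \<rho> (m + k) * (c (m + k) * c 0)" using cS[of "m + k"] by simp
    also have "\<dots> \<le> \<rho> (m + k) * (c m * c k)" using le[OF that, of k] \<rho>pos[of "m + k"] by (intro mult_left_mono) auto
    also have "\<dots> < \<rho> k * (c m * c k)"
      using \<rho>mono[of k "m + k"] that cpos[of m] cpos[of k] by (intro mult_strict_right_mono) auto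
    also have "\<dots> = c m * c (Suc k)" using cS[of k] by simp
    finally show ?thesis .
  qed
  have sP: "c sums P" unfolding c_def P_def by (rule F_sums) (use assms in auto)
  have sR: "(\<lambda>k. c (m + k)) sums marcumP (\<mu> + real m) x y" for m
  proof -
    have "(\<lambda>k. marcumF (\<mu> + real m + real k) x y) sums marcumP (\<mu> + real m) x y"
      by (rule F_sums) (use assms in auto)
    then show ?thesis unfolding c_def by (simp add: add.assoc)
  qed
  have partial: "(\<Sum>k\<le>n. c k) = P - marcumP (\<mu> + real (Suc n)) x y" for n
    using F_partial[of \<mu> x y "Suc n"] assms unfolding c_def P_def by (simp add: lessThan_Suc_atMost)
  have c0: "marcumF \<mu> x y = c 0" by (simp add: c_def)
  have cn: "marcumF (\<mu> + real n + 1) x y = c (Suc n)" for n by (simp add: c_def add_ac)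
  have U: "marcumU \<mu> n x y = (\<Sum>k\<le>n. c k) / (c 0 - c (Suc n)) * c 0" for n
    unfolding marcumU_def c0 cn by (simp add: c_def)
  have part1: "P < marcumU \<mu> n x y" if cond: "c (Suc n) < c 0" for n
  proof -
    define m where "m = Suc n"
    define R where "R = marcumP (\<mu> + real m) x y"
    have "(\<lambda>k. c m * c k - c (m + k) * c 0) sums (c m * P - R * c 0)"
      unfolding R_def by (intro sums_diff sums_mult sums_mult2 sP sR)
    moreover have "0 < (\<Sum>k. c m * c k - c (m + k) * c 0)"
    proof (rule suminf_pos2[where i=1])
      show "summable (\<lambda>k. c m * c k - c (m + k) * c 0)" using calculation by (simp add: sums_iff)
      show "0 \<le> c m * c k - c (m + k) * c 0" for k using le[of m k] by (simp add: m_def)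
      show "0 < c m * c 1 - c (m + 1) * c 0" using lt[of m 0] by (simp add: m_def)
    qed
    ultimately have key: "R * c 0 < c m * P" by (simp add: sums_iff)
    have D: "c 0 - c m > 0" using cond by (simp add: m_def)
    have "P * (c 0 - c m) < (P - R) * c 0" using key by (simp add: algebra_simps)
    then have "P < (P - R) * c 0 / (c 0 - c m)" using D by (simp add: pos_less_divide_eq)
    then show ?thesis unfolding U partial using m_def R_def by simp
  qed
  have lim1: "(\<lambda>n. \<Sum>k\<le>n. c k) \<longlonglongrightarrow> P"
  proof -
    have "(\<lambda>n. \<Sum>k<n. c k) \<longlonglongrightarrow> P" using sP by (simp add: sums_def)
    then have "(\<lambda>n. \<Sum>k<Suc n. c k) \<longlonglongrightarrow> P" by (rule LIMSEQ_Suc)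
    then show ?thesis by (simp add: lessThan_Suc_atMost)
  qed
  have lim2: "(\<lambda>n. c (Suc n)) \<longlonglongrightarrow> 0"
    using LIMSEQ_Suc[OF summable_LIMSEQ_zero[OF sums_summable[OF sP]]] .
  have "(\<lambda>n. (\<Sum>k\<le>n. c k) / (c 0 - c (Suc n)) * c 0) \<longlonglongrightarrow> P / (c 0 - 0) * c 0"
    by (intro tendsto_mult tendsto_divide lim1 tendsto_diff lim2 tendsto_const) (use cpos[of 0] in simp)
  then have "(\<lambda>n. marcumU \<mu> n x y) \<longlonglongrightarrow> P" unfolding U using cpos[of 0] by simp
  moreover have "\<forall>n::nat. marcumF \<mu> x y > marcumF (\<mu> + real n + 1) x y \<longrightarrow> P < marcumU \<mu> n x y"
    unfolding c0 cn using part1 by blast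
  ultimately show ?thesis unfolding P_def by blast
qed

end
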